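(* There exists a constant $c>0$ such that for $p=p(n)\le c/n^2$ the following holds asymptotically almost surely: for every nonempty subset $F$ of the hyperedges of $\mathcal H=\mathcal H(\Gamma(n,p))$ there exist a vertex $v$ of $\mathcal H$ and a hyperedge $E\in F$ such that $E$ is the only hyperedge of $F$ containing $v$, and moreover $v$ is pivotal for $E$.
   Context: The random triangular group $\Gamma(n,p)$ is given by a presentation $\langle S\mid R\rangle$, where $|S|=n$ and $R$ contains independently, each with probability $p$, every cyclically reduced word $abc$ of length three over $S\cup S^{-1}$ ($a\neq b^{-1}$, $b\neq c^{-1}$, $c\neq a^{-1}$). Relations are classified: type 1 are words $aaa$ (with $a\in S\cup S^{-1}$); type 2 are words of the form $aab$, $aba$, $baa$ with $a\neq b$, in which $b$ is called pivotal; type 3 are words $abc$ with $a,b,c$ pairwise distinct letters, in which every element is pivotal. The random multi-hypergraph $\mathcal H(\Gamma(n,p))$ has vertex set $S$, and each relation $r\in R$ gives one hyperedge: if $r$ is of type 3, the 3-edge $E=\{a,b,c\}\subseteq S$ of the three generators such that $r$ is built from letters of $E\cup E^{-1}$, with all three vertices pivotal; if $r$ is of type 2, the 2-edge $E=\{a,b\}\subseteq S$ such that $r$ is built from letters of $E\cup E^{-1}$, with the generator corresponding to the pivotal letter of $r$ marked as pivotal for $E$; if $r$ is of type 1 ($r=aaa$ or $r=a^{-1}a^{-1}a^{-1}$ with $a\in S$), the 1-edge $\{a\}$. Asymptotically almost surely means with probability tending to $1$ as $n\to\infty$. *)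

theory Defs
  imports "HOL-Probability.Probability"
begin

text \<open>A letter over S = {0..<n}: a generator index together with a flag;
  (a, False) is the generator a, (a, True) is its inverse.\<close>
type_synonym letter = "nat \<times> bool"
type_synonym word3 = "letter \<times> letter \<times> letter"

definition linv :: "letter \<Rightarrow> letter" where
  "linv x = (fst x, \<not> snd x)"

definition gen :: "letter \<Rightarrow> nat" where
  "gen x = fst x"

definition words :: "nat \<Rightarrow> word3 set" where
  "words n = {(a, b, c). fst a < n \<and> fst b < n \<and> fst c < n \<and>
                b \<noteq> linv a \<and> c \<noteq> linv b \<and> a \<noteq> linv c}"

definition letters_of :: "word3 \<Rightarrow> letter list" where
  "letters_of w = (case w of (a, b, c) \<Rightarrow> [a, b, c])"

definition hedge :: "word3 \<Rightarrow> nat set" where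
  "hedge w = gen ` set (letters_of w)"

text \<open>Pivotal vertices of the hyperedge of a relation: generators of letters that
  occur exactly once in the word (type 1: none; type 2: the letter b; type 3: all).\<close>
definition pivots :: "word3 \<Rightarrow> nat set" where
  "pivots w = {gen x | x. count_list (letters_of w) x = 1}"

text \<open>The random relator set R of \<Gamma>(n,p): each cyclically reduced word of length 3
  is included independently with probability p.\<close>
definition random_relators :: "nat \<Rightarrow> real \<Rightarrow> (word3 \<Rightarrow> bool) pmf" where
  "random_relators n p = Pi_pmf (words n) False (\<lambda>_. bernoulli_pmf p)"

definition good_hypergraph :: "word3 set \<Rightarrow> bool" where
  "good_hypergraph R \<longleftrightarrow>
     (\<forall>F. F \<subseteq> R \<and> F \<noteq> {} \<longrightarrow>
        (\<exists>v. \<exists>E\<in>F. v \<in> hedge E \<and> v \<in> pivots E \<and>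
              (\<forall>E'\<in>F. v \<in> hedge E' \<longrightarrow> E' = E)))"

end

theory Submission
  imports Defs
begin


lemma word_bound: "card (hedge w) + card (hedge w - pivots w) \<le> 3"
proof -
  obtain a b c where w: "w = (a,b,c)" by (cases w) auto
  have h: "hedge w = {gen a, gen b, gen c}" by (simp add: hedge_def letters_of_def w)
  have p: "pivots w = {gen x | x. count_list [a,b,c] x = 1}" by (simp add: pivots_def letters_of_def w)
  show ?thesis
  proof (cases "a = b")
    case ab: True
    show ?thesis
    proof (cases "b = c")
      case True
      have "hedge w - pivots w \<subseteq> {gen a}" using h True ab by auto
      then have "card (hedge w - pivots w) \<le> 1" using card_mono[of "{gen a}" "hedge w - pivots w"] by simp
      then show ?thesis using ab h True by (simp add: card_insert_if)
    next
      case False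
      have "count_list [a,b,c] c = 1" using False ab by simp
      then have "gen c \<in> pivots w" unfolding p by blast
      then have "hedge w - pivots w \<subseteq> {gen a}" using h ab by auto
      then have "card (hedge w - pivots w) \<le> 1" using card_mono[of "{gen a}"] by fastforce
      moreover have "card (hedge w) \<le> 2" using h ab by (simp add: card_insert_if)
      ultimately show ?thesis by linarith
    qed
  next
    case ab: False
    show ?thesis
    proof (cases "b = c")
      case True
      have "count_list [a,b,c] a = 1" using True ab by simp
      then have "gen a \<in> pivots w" unfolding p by blast
      then have "hedge w - pivots w \<subseteq> {gen b}" using h True by auto
      then have "card (hedge w - pivots w) \<le> 1" using card_mono[of "{gen b}"] by fastforce
      moreover have "card (hedge w) \<le> 2" using h True by (simp add: card_insert_if)
      ultimately show ?thesis by linarith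
    next
      case bc: False
      show ?thesis
      proof (cases "a = c")
        case True
        have "count_list [a,b,c] b = 1" using True ab bc by simp
        then have "gen b \<in> pivots w" unfolding p by blast
        then have "hedge w - pivots w \<subseteq> {gen a}" using h True by auto
        then have "card (hedge w - pivots w) \<le> 1" using card_mono[of "{gen a}"] by fastforce
        moreover have "card (hedge w) \<le> 2" using h True by (simp add: card_insert_if)
        ultimately show ?thesis by linarith
      next
        case False
        have "count_list [a,b,c] a = 1" "count_list [a,b,c] b = 1" "count_list [a,b,c] c = 1"
          using False ab bc by auto
        then have "gen a \<in> pivots w" "gen b \<in> pivots w" "gen c \<in> pivots w"
          unfolding p by blast+
        then have "hedge w - pivots w = {}" using h by auto
        moreover have "card (hedge w) \<le> 3" using h card_insert_le
          by (simp add: card_insert_if)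
        ultimately show ?thesis by (metis add_0_right card.empty)
      qed
    qed
  qed
qed

lemma hedge_finite: "finite (hedge w)" by (simp add: hedge_def)

lemma piv_sub: "pivots E \<subseteq> hedge E"
proof
  fix v assume "v \<in> pivots E"
  then obtain x where x: "v = gen x" "count_list (letters_of E) x = 1" by (auto simp: pivots_def)
  then have "x \<in> set (letters_of E)" using count_list_0_iff[of "letters_of E" x] by auto
  then show "v \<in> hedge E" using x by (simp add: hedge_def)
qed

definition vs :: "word3 set \<Rightarrow> nat set" where "vs F = \<Union> (hedge ` F)"

definition witness :: "word3 set \<Rightarrow> bool" where
  "witness F \<longleftrightarrow> (\<exists>v. \<exists>E\<in>F. v \<in> hedge E \<and> v \<in> pivots E \<and>
              (\<forall>E'\<in>F. v \<in> hedge E' \<longrightarrow> E' = E))"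

lemma bad_bound:
  assumes fin: "finite F" and nw: "\<not> witness F"
  shows "2 * card (vs F) \<le> 3 * card F"
proof -
  define V where "V = vs F"
  have finV: "finite V" using fin by (simp add: V_def vs_def hedge_finite)
  define deg where "deg v = card {E\<in>F. v \<in> hedge E}" for v
  define N where "N = V - (\<Union>E\<in>F. pivots E)"
  have finN: "finite N" using finV N_def by auto
  have sumdeg: "(\<Sum>v\<in>V. deg v) = (\<Sum>E\<in>F. card (hedge E))"
  proof -
    have "(\<Sum>v\<in>V. deg v) = (\<Sum>v\<in>V. \<Sum>E\<in>F. of_bool (v \<in> hedge E))"
      unfolding deg_def using fin by (simp add: sum.inter_filter[symmetric] Int_def)
    also have "\<dots> = (\<Sum>E\<in>F. \<Sum>v\<in>V. of_bool (v \<in> hedge E))" by (rule sum.swap)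
    also have "\<dots> = (\<Sum>E\<in>F. card (hedge E))"
    proof (rule sum.cong[OF refl])
      fix E assume "E \<in> F"
      then have "hedge E \<subseteq> V" by (auto simp: V_def vs_def)
      then have "{v\<in>V. v \<in> hedge E} = hedge E" by auto
      then show "(\<Sum>v\<in>V. of_bool (v \<in> hedge E)) = card (hedge E)"
        using finV by (simp add: sum.inter_filter[symmetric] Int_def)
    qed
    finally show ?thesis .
  qed
  have degge: "2 - of_bool (v \<in> N) \<le> deg v" if vV: "v \<in> V" for v
  proof (cases "v \<in> N")
    case True
    from vV obtain E where "E \<in> F" "v \<in> hedge E" by (auto simp: V_def vs_def)
    then have "{E} \<subseteq> {E\<in>F. v \<in> hedge E}" by auto
    then have "1 \<le> deg v" unfolding deg_def using card_mono[of "{E\<in>F. v \<in> hedge E}" "{E}"] fin by auto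
    then show ?thesis using True by simp
  next
    case False
    then obtain E where E: "E \<in> F" "v \<in> pivots E" using vV N_def by auto
    have piv: "pivots E \<subseteq> hedge E" by (rule piv_sub)
    then have vE: "v \<in> hedge E" using E by auto
    from nw E vE obtain E' where E': "E' \<in> F" "v \<in> hedge E'" "E' \<noteq> E"
      unfolding witness_def by blast
    have "{E, E'} \<subseteq> {E\<in>F. v \<in> hedge E}" using E E' vE by auto
    then have "card {E, E'} \<le> deg v" unfolding deg_def using card_mono fin by (metis (no_types, lifting) finite_subset mem_Collect_eq subsetI)
    then show ?thesis using E' False by simp
  qed
  have NV: "N \<subseteq> (\<Union>E\<in>F. hedge E - pivots E)" unfolding N_def V_def vs_def by auto
  have cardN: "card N \<le> (\<Sum>E\<in>F. card (hedge E - pivots E))"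
    using card_mono[OF _ NV] card_UN_le[OF fin, of "\<lambda>E. hedge E - pivots E"] fin hedge_finite
    by (meson finite_Diff finite_UN_I le_trans)
  have "(\<Sum>v\<in>V. 2 - of_bool (v \<in> N)) \<le> (\<Sum>v\<in>V. deg v)" by (rule sum_mono) (use degge in auto)
  moreover have "(\<Sum>v\<in>V. (2::nat) - of_bool (v \<in> N)) + card N = 2 * card V"
  proof -
    have NsV: "N \<subseteq> V" by (auto simp: N_def)
    have "(\<Sum>v\<in>V. (2::nat) - of_bool (v \<in> N)) + (\<Sum>v\<in>V. of_bool (v \<in> N)) = (\<Sum>v\<in>V. 2)"
      by (subst sum.distrib[symmetric]) (rule sum.cong, auto)
    moreover have "(\<Sum>v\<in>V. of_bool (v \<in> N) :: nat) = card N"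
    proof -
      have "{x\<in>V. x\<in>N} = N" using NsV by auto
      then show ?thesis using finV NsV by (simp add: sum.inter_filter[symmetric] Int_absorb1)
    qed
    ultimately show ?thesis by simp
  qed
  moreover have "(\<Sum>E\<in>F. card (hedge E)) + (\<Sum>E\<in>F. card (hedge E - pivots E)) \<le> (\<Sum>E\<in>F. 3)"
    by (subst sum.distrib[symmetric]) (rule sum_mono, rule word_bound)
  ultimately show ?thesis using sumdeg cardN V_def by simp
qed



lemma pow_fact_le_exp: "0 \<le> (x::real) \<Longrightarrow> x^n / fact n \<le> exp x"
proof -
  assume x: "0 \<le> x"
  have "(\<Sum>i\<in>{n}. x^i /\<^sub>R fact i) \<le> (\<Sum>i. x^i /\<^sub>R fact i)"
    by (rule sum_le_suminf[OF summable_exp_generic]) (use x in auto)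
  then show ?thesis by (simp add: exp_def divide_inverse mult.commute)
qed

lemma pow_le_fact: "real k ^ k \<le> 3^k * fact k"
proof -
  have "real k ^ k / fact k \<le> exp (real k)" by (rule pow_fact_le_exp) simp
  also have "exp (real k) = exp 1 ^ k" using exp_of_nat_mult[of k 1] by simp
  also have "\<dots> \<le> 3^k" by (rule power_mono[OF exp_le]) simp
  finally show ?thesis by (simp add: divide_le_eq mult.commute)
qed

lemma binom_le: "real (n choose k) \<le> real n ^ k / fact k"
proof -
  have "(n choose k) * fact k \<le> n^k" by (rule binomial_fact_pow)
  then have "real (n choose k) * fact k \<le> real n ^ k"
    by (metis of_nat_fact of_nat_le_iff of_nat_mult of_nat_power)
  then show ?thesis by (simp add: le_divide_eq)
qed

lemma key:
  fixes n V k m :: nat and c p :: real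
  assumes V1: "1 \<le> V" and Vn: "V \<le> n" and Vk: "2*V \<le> 3*k" and p0: "0 \<le> p"
    and pc: "p \<le> c / (real n)^2" and m: "m \<le> 8*V^3"
  shows "real (n choose V) * real (m choose k) * p^k \<le> (324*c)^k * (real V / real n)"
proof -
  have k1: "1 \<le> k" using V1 Vk by linarith
  have n1: "1 \<le> n" using V1 Vn by linarith
  define d where "d = 2*k - V"
  have d1: "1 \<le> d" and dk: "2*k = V + d" using Vk k1 unfolding d_def by linarith+
  have "0 \<le> c / (real n)^2" using p0 pc by linarith
  then have c0: "0 \<le> c" using n1 by (simp add: zero_le_divide_iff)
  have e1: "real (n choose V) \<le> real n ^ V / fact V" by (rule binom_le)
  have e2: "real (m choose k) \<le> (8 * real V ^ 3) ^ k / fact k"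
  proof -
    have "real (m choose k) \<le> real m ^ k / fact k" by (rule binom_le)
    also have "\<dots> \<le> (8 * real V ^ 3) ^ k / fact k"
    proof -
      have "real m \<le> real (8*V^3)" using m of_nat_le_iff by blast
      then have "real m \<le> 8 * real V ^ 3" by simp
      then show ?thesis by (intro divide_right_mono power_mono) auto
    qed
    finally show ?thesis .
  qed
  have e3: "p^k \<le> c^k / real n ^ (2*k)"
  proof -
    have "p^k \<le> (c / (real n)^2)^k" by (rule power_mono[OF pc p0])
    also have "\<dots> = c^k / real n ^ (2*k)" by (simp add: power_divide power_mult)
    finally show ?thesis .
  qed
  have f1: "real V ^ V \<le> 3^V * fact V" by (rule pow_le_fact)
  have f2: "real k ^ k \<le> 3^k * fact k" by (rule pow_le_fact)
  have f3: "(3::real)^V \<le> 9^k"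
  proof -
    have "(3::real)^V \<le> 3^(2*k)" by (rule power_increasing) (use Vk in auto)
    also have "\<dots> = 9^k" by (simp add: power_mult)
    finally show ?thesis .
  qed
  have f4: "(2*real V)^k \<le> (3*real k)^k"
    by (rule power_mono) (use Vk in \<open>simp_all add: of_nat_le_iff[symmetric]\<close>)
  have f5: "(real V / real n) ^ d \<le> real V / real n"
  proof -
    have "0 \<le> real V / real n" "real V / real n \<le> 1" using Vn n1 by auto
    then show ?thesis using d1 by (metis power_decreasing power_one_right)
  qed
  have A: "real V ^ V / fact V \<le> 9^k"
  proof -
    have "fact V * 3^V \<le> fact V * (9::real)^k" using f3 by (intro mult_left_mono) auto
    then have "real V ^ V \<le> fact V * 9^k" using f1 by (metis mult.commute order_trans)
    then show ?thesis by (simp add: divide_le_eq mult.commute)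
  qed
  have B: "real V ^ k / fact k \<le> (9/2)^k"
  proof -
    have "2^k * real V ^ k \<le> 3^k * real k ^ k" using f4 by (simp add: power_mult_distrib)
    also have "\<dots> \<le> 3^k * (3^k * fact k)" using f2 by (intro mult_left_mono) auto
    also have "\<dots> = 9^k * fact k"
    proof -
      have "(3::real)^k * 3^k = 9^k" by (simp add: power_mult_distrib[symmetric])
      then show ?thesis by (simp only: mult.assoc[symmetric])
    qed
    finally have h: "2^k * real V ^ k \<le> 9^k * fact k" .
    have "real V ^ k \<le> (9/2)^k * fact k"
    proof -
      have "real V ^ k = (2^k * real V ^ k) / 2^k" by simp
      also have "\<dots> \<le> (9^k * fact k) / 2^k" using h by (intro divide_right_mono) auto
      also have "\<dots> = (9/2)^k * fact k" by (simp add: power_divide)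
      finally show ?thesis .
    qed
    then show ?thesis by (simp add: divide_le_eq)
  qed
  define a where "a = real V"
  define b where "b = real n"
  have a0: "0 \<le> a" and b0: "0 < b" using n1 by (auto simp: a_def b_def)
  have m1: "real (n choose V) * real (m choose k) \<le> (b ^ V / fact V) * ((8 * a ^ 3) ^ k / fact k)"
    by (rule mult_mono) (use e1 e2 in \<open>auto simp: a_def b_def\<close>)
  have m2: "real (n choose V) * real (m choose k) * p^k
      \<le> ((b ^ V / fact V) * ((8 * a ^ 3) ^ k / fact k)) * (c^k / b ^ (2*k))"
    by (rule mult_mono[OF m1]) (use e3 p0 c0 a0 in \<open>auto simp: b_def\<close>)
  have pa: "a ^ (3*k) = a ^ V * a ^ k * a ^ d"
  proof -
    have "3*k = V + k + d" using dk by linarith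
    then show ?thesis by (simp only: power_add)
  qed
  have pb: "b ^ (2*k) = b ^ V * b ^ d" using dk by (simp only: power_add)
  have eq: "((b ^ V / fact V) * ((8 * a ^ 3) ^ k / fact k)) * (c^k / b ^ (2*k))
      = (8*c)^k * (a ^ V / fact V) * (a ^ k / fact k) * (a / b) ^ d"
  proof -
    have "(8 * a ^ 3) ^ k = 8^k * a^(3*k)" by (simp add: power_mult_distrib power_mult)
    then have "((b ^ V / fact V) * ((8 * a ^ 3) ^ k / fact k)) * (c^k / b ^ (2*k))
       = ((b ^ V / fact V) * ((8^k * (a ^ V * a ^ k * a ^ d)) / fact k)) * (c^k / (b ^ V * b ^ d))"
      using pa pb by simp
    also have "\<dots> = (8^k * c^k) * (a ^ V / fact V) * (a ^ k / fact k) * (a ^ d / b ^ d)"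
      using b0 by (simp add: field_simps)
    also have "\<dots> = (8*c)^k * (a ^ V / fact V) * (a ^ k / fact k) * (a / b) ^ d"
      by (simp add: power_mult_distrib power_divide)
    finally show ?thesis .
  qed
  have A': "a ^ V / fact V \<le> 9^k" using A by (simp add: a_def)
  have B': "a ^ k / fact k \<le> (9/2)^k" using B by (simp add: a_def)
  have f5': "(a / b) ^ d \<le> a / b" using f5 by (simp add: a_def b_def)
  have nn1: "0 \<le> (8*c)^k" using c0 by simp
  have m3: "(8*c)^k * (a ^ V / fact V) \<le> (8*c)^k * 9^k" by (rule mult_left_mono[OF A' nn1])
  have m4: "(8*c)^k * (a ^ V / fact V) * (a ^ k / fact k) \<le> (8*c)^k * 9^k * (9/2)^k"
    by (rule mult_mono[OF m3 B']) (use c0 a0 in auto)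
  have m5: "(8*c)^k * (a ^ V / fact V) * (a ^ k / fact k) * (a / b) ^ d \<le> (8*c)^k * 9^k * (9/2)^k * (a/b)"
    by (rule mult_mono[OF m4 f5']) (use c0 a0 b0 in auto)
  have "(8*c)^k * 9^k * (9/2)^k = ((8*c) * 9 * (9/2))^k" by (simp only: power_mult_distrib)
  also have "(8*c) * 9 * (9/2) = 324 * c" by simp
  finally have e: "(8*c)^k * 9^k * (9/2)^k = (324*c)^k" .
  have "real (n choose V) * real (m choose k) * p^k \<le> (324*c)^k * (a/b)"
    using order_trans[OF m2[unfolded eq] m5[unfolded e]] .
  then show ?thesis by (simp add: a_def b_def)
qed



lemma words_sub: "words n \<subseteq> ({..<n} \<times> UNIV) \<times> ({..<n} \<times> UNIV) \<times> ({..<n} \<times> UNIV)"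
  by (auto simp: words_def)

lemma finite_words: "finite (words n)"
  by (rule finite_subset[OF words_sub]) auto

lemma prob_all:
  assumes F: "F \<subseteq> words n" and p0: "0 \<le> p" and p1: "p \<le> 1"
  shows "measure_pmf.prob (random_relators n p) {R. \<forall>w\<in>F. R w} = p ^ card F"
proof -
  define B where "B w = (if w \<in> F then {True} else UNIV)" for w
  have ev: "{R. \<forall>w\<in>F. R w} = Pi (words n) B"
    using F by (auto simp: B_def Pi_def)
  have "measure_pmf.prob (random_relators n p) (Pi (words n) B)
       = (\<Prod>w\<in>words n. measure_pmf.prob (bernoulli_pmf p) (B w))"
    unfolding random_relators_def by (rule measure_Pi_pmf_Pi[OF finite_words])
  also have "\<dots> = (\<Prod>w\<in>words n. if w \<in> F then p else 1)"
    by (rule prod.cong) (use p0 p1 in \<open>auto simp: B_def measure_pmf_single\<close>)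
  also have "\<dots> = p ^ card F"
    using F finite_words[of n] by (simp add: prod.If_cases Int_absorb1)
  finally show ?thesis using ev by simp
qed

definition Bad :: "nat \<Rightarrow> word3 set set" where
  "Bad n = {F. F \<subseteq> words n \<and> F \<noteq> {} \<and> \<not> witness F}"

lemma finite_Bad: "finite (Bad n)"
  by (rule finite_subset[of _ "Pow (words n)"]) (auto simp: Bad_def finite_words)

lemma union_bound:
  assumes p0: "0 \<le> p" and p1: "p \<le> 1"
  shows "measure_pmf.prob (random_relators n p) {R. \<not> good_hypergraph {w \<in> words n. R w}}
         \<le> (\<Sum>F\<in>Bad n. p ^ card F)"
proof -
  have sub: "{R. \<not> good_hypergraph {w \<in> words n. R w}} \<subseteq> (\<Union>F\<in>Bad n. {R. \<forall>w\<in>F. R w})"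
  proof
    fix R assume "R \<in> {R. \<not> good_hypergraph {w \<in> words n. R w}}"
    then obtain F where F: "F \<subseteq> {w \<in> words n. R w}" "F \<noteq> {}" "\<not> witness F"
      unfolding good_hypergraph_def witness_def by blast
    then have "F \<in> Bad n" by (auto simp: Bad_def)
    then show "R \<in> (\<Union>F\<in>Bad n. {R. \<forall>w\<in>F. R w})" using F by blast
  qed
  have "measure_pmf.prob (random_relators n p) {R. \<not> good_hypergraph {w \<in> words n. R w}}
      \<le> measure_pmf.prob (random_relators n p) (\<Union>F\<in>Bad n. {R. \<forall>w\<in>F. R w})"
    by (rule measure_pmf.finite_measure_mono[OF sub]) simp
  also have "\<dots> \<le> (\<Sum>F\<in>Bad n. measure_pmf.prob (random_relators n p) {R. \<forall>w\<in>F. R w})"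
    by (rule measure_pmf.finite_measure_subadditive_finite[OF finite_Bad]) simp
  also have "\<dots> = (\<Sum>F\<in>Bad n. p ^ card F)"
    by (rule sum.cong) (use p0 p1 in \<open>auto simp: Bad_def intro: prob_all\<close>)
  finally show ?thesis .
qed


definition W :: "nat \<Rightarrow> nat set \<Rightarrow> word3 set" where
  "W n U = {w \<in> words n. hedge w \<subseteq> U}"

lemma card_W: "finite U \<Longrightarrow> card (W n U) \<le> 8 * card U ^ 3"
proof -
  assume fU: "finite U"
  have "W n U \<subseteq> (U \<times> (UNIV::bool set)) \<times> (U \<times> (UNIV::bool set)) \<times> (U \<times> (UNIV::bool set))"
  proof
    fix w assume wW: "w \<in> W n U"
    obtain a b c where wa: "w = (a,b,c)" by (cases w) auto
    have "hedge (a,b,c) = {fst a, fst b, fst c}" by (simp add: hedge_def letters_of_def gen_def)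
    then have "{fst a, fst b, fst c} \<subseteq> U" using wW wa by (simp add: W_def)
    then have "fst a \<in> U" "fst b \<in> U" "fst c \<in> U" by blast+
    then show "w \<in> (U \<times> (UNIV::bool set)) \<times> (U \<times> (UNIV::bool set)) \<times> (U \<times> (UNIV::bool set))"
      by (simp add: wa mem_Times_iff)
  qed
  then have "card (W n U) \<le> card ((U \<times> (UNIV::bool set)) \<times> (U \<times> (UNIV::bool set)) \<times> (U \<times> (UNIV::bool set)))"
  proof -
    have fin: "finite ((U \<times> (UNIV::bool set)) \<times> (U \<times> (UNIV::bool set)) \<times> (U \<times> (UNIV::bool set)))" using fU by (intro finite_cartesian_product) auto
    show ?thesis by (rule card_mono[OF fin]) (rule \<open>W n U \<subseteq> _\<close>)
  qed
  also have "\<dots> = 8 * card U ^ 3" by (simp add: card_cartesian_product power3_eq_cube)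
  finally show ?thesis .
qed

lemma geom: "(\<Sum>k\<le>K. (1/2::real)^k) \<le> 2"
proof -
  have "(\<Sum>k\<le>K. (1/2::real)^k) = 2 - (1/2)^K" by (induction K) auto
  then show ?thesis by simp
qed

lemma sq_le: "real k ^ 2 * (1/8)^k \<le> (1/2::real)^k"
proof -
  have "k < 2^k" by simp
  then have "real k \<le> 2^k" by (metis less_imp_le of_nat_le_iff of_nat_numeral of_nat_power)
  then have "real k ^ 2 \<le> (2^k)^2" by (rule power_mono) simp
  also have "\<dots> = (2^2)^k" by (simp only: power_mult[symmetric] mult.commute)
  also have "\<dots> = 4^k" by simp
  finally have h: "real k ^ 2 \<le> 4^k" .
  have "real k ^ 2 * (1/8)^k \<le> 4^k * (1/8)^k" by (rule mult_right_mono[OF h]) simp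
  also have "\<dots> = (1/2)^k" by (simp add: power_mult_distrib[symmetric])
  finally show ?thesis .
qed

lemma sum_bound:
  fixes n :: nat and p c :: real
  assumes n1: "1 \<le> n" and p0: "0 \<le> p" and pc: "p \<le> c / (real n)^2"
    and c0: "0 \<le> c" and c8: "324 * c \<le> 1/8"
  shows "(\<Sum>F\<in>Bad n. p ^ card F) \<le> 12 / real n"
proof -
  define K where "K = card (words n)"
  define T where "T = Pow {..<n} \<times> {..K}"
  define g where "g F = (vs F, card F)" for F
  define G where "G V k = (if 1 \<le> V \<and> 2*V \<le> 3*k then (324*c)^k * (real V / real n) / real (n choose V) else 0)" for V k
  have finT: "finite T" by (simp add: T_def)
  have hedge_sub: "hedge w \<subseteq> {..<n}" if "w \<in> words n" for w
    using that by (auto simp: words_def hedge_def letters_of_def gen_def)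
  have gT: "g ` Bad n \<subseteq> T"
  proof
    fix y assume "y \<in> g ` Bad n"
    then obtain F where F: "F \<in> Bad n" "y = g F" by auto
    have "vs F \<subseteq> {..<n}" using F hedge_sub unfolding Bad_def vs_def by blast
    moreover have "card F \<le> K" unfolding K_def using F finite_words by (auto simp: Bad_def intro: card_mono)
    ultimately show "y \<in> T" using F by (simp add: T_def g_def)
  qed
  have G0: "0 \<le> G V k" for V k using c0 by (simp add: G_def)
  have inner: "(\<Sum>F\<in>{F \<in> Bad n. g F = (U,k)}. p ^ card F) \<le> G (card U) k"
    if U: "U \<subseteq> {..<n}" for U k
  proof (cases "{F \<in> Bad n. g F = (U,k)} = {}")
    case True
    show ?thesis unfolding True using G0 by simp
  next
    case False
    then obtain F0 where F0: "F0 \<in> Bad n" "vs F0 = U" "card F0 = k" by (auto simp: g_def)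
    have fU: "finite U" using U finite_subset by blast
    have finF0: "finite F0" using F0 finite_words by (auto simp: Bad_def intro: finite_subset)
    have F0ne: "F0 \<noteq> {}" using F0 by (simp add: Bad_def)
    have hk: "2 * card U \<le> 3 * k" using bad_bound[OF finF0] F0 by (simp add: Bad_def)
    have "U \<noteq> {}"
    proof -
      obtain w where "w \<in> F0" using F0ne by auto
      moreover have "hedge w \<noteq> {}"
      proof -
        obtain a b c where "w = (a,b,c)" by (cases w) auto
        then show ?thesis by (simp add: hedge_def letters_of_def)
      qed
      ultimately show ?thesis using F0 by (auto simp: vs_def)
    qed
    then have V1: "1 \<le> card U" using fU by (simp add: Suc_le_eq card_gt_0_iff)
    have Vn: "card U \<le> n" using card_mono[OF _ U] by simp
    define m where "m = card (W n U)"
    have m8: "m \<le> 8 * card U ^ 3" using card_W[OF fU] by (simp add: m_def)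
    have finW: "finite (W n U)" by (rule finite_subset[OF _ finite_words]) (auto simp: W_def)
    have sub: "{F \<in> Bad n. g F = (U,k)} \<subseteq> {F. F \<subseteq> W n U \<and> card F = k}"
      by (auto simp: Bad_def g_def W_def vs_def)
    have "(\<Sum>F\<in>{F \<in> Bad n. g F = (U,k)}. p ^ card F) = real (card {F \<in> Bad n. g F = (U,k)}) * p^k"
      by (simp add: g_def)
    also have "\<dots> \<le> real (card {F. F \<subseteq> W n U \<and> card F = k}) * p^k"
      by (intro mult_right_mono) (use p0 sub finW in \<open>auto intro!: card_mono\<close>)
    also have "\<dots> = real (m choose k) * p^k" by (simp add: n_subsets[OF finW] m_def)
    finally have s1: "(\<Sum>F\<in>{F \<in> Bad n. g F = (U,k)}. p ^ card F) \<le> real (m choose k) * p^k" .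
    have kb: "real (n choose card U) * real (m choose k) * p^k \<le> (324*c)^k * (real (card U) / real n)"
      by (rule key[OF V1 Vn hk p0 pc m8])
    have bpos: "0 < real (n choose card U)" using Vn by simp
    have "real (m choose k) * p^k \<le> (324*c)^k * (real (card U) / real n) / real (n choose card U)"
      by (subst pos_le_divide_eq[OF bpos]) (use kb in \<open>simp add: mult_ac\<close>)
    then show ?thesis using s1 V1 hk by (simp add: G_def)
  qed
  have "(\<Sum>F\<in>Bad n. p ^ card F) = (\<Sum>y\<in>T. \<Sum>F\<in>{F \<in> Bad n. g F = y}. p ^ card F)"
    by (rule sum.group[OF finite_Bad finT gT, symmetric])
  also have "\<dots> \<le> (\<Sum>y\<in>T. G (card (fst y)) (snd y))"
    by (rule sum_mono) (auto simp: T_def intro: inner)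
  also have "\<dots> = (\<Sum>U\<in>Pow {..<n}. \<Sum>k\<le>K. G (card U) k)"
    unfolding T_def by (simp add: sum.cartesian_product split_def)
  also have "\<dots> = (\<Sum>k\<le>K. \<Sum>U\<in>Pow {..<n}. G (card U) k)" by (rule sum.swap)
  also have "\<dots> \<le> (\<Sum>k\<le>K. 6 * (1/2)^k / real n)"
  proof (rule sum_mono)
    fix k assume "k \<in> {..K}"
    have "(\<Sum>U\<in>Pow {..<n}. G (card U) k) = (\<Sum>V\<in>{..n}. \<Sum>U\<in>{U \<in> Pow {..<n}. card U = V}. G (card U) k)"
    proof (rule sum.group[symmetric])
      show "card ` Pow {..<n} \<subseteq> {..n}"
      proof
        fix y assume "y \<in> card ` Pow {..<n}"
        then obtain U where "U \<subseteq> {..<n}" "y = card U" by auto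
        then show "y \<in> {..n}" using card_mono[of "{..<n}" U] by simp
      qed
    qed simp_all
    also have "\<dots> = (\<Sum>V\<in>{..n}. real (n choose V) * G V k)"
    proof (rule sum.cong[OF refl])
      fix V assume "V \<in> {..n}"
      have "card {U \<in> Pow {..<n}. card U = V} = n choose V"
        using n_subsets[of "{..<n}" V] by (simp add: Collect_conj_eq Pow_def)
      then show "(\<Sum>U\<in>{U \<in> Pow {..<n}. card U = V}. G (card U) k) = real (n choose V) * G V k"
        by simp
    qed
    also have "\<dots> \<le> (\<Sum>V\<in>{..n}. if V \<le> 2*k then (1/8)^k * (2*real k / real n) else 0)"
    proof (rule sum_mono)
      fix V assume V: "V \<in> {..n}"
      show "real (n choose V) * G V k \<le> (if V \<le> 2*k then (1/8)^k * (2*real k / real n) else 0)"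
      proof (cases "1 \<le> V \<and> 2*V \<le> 3*k")
        case True
        have bpos: "0 < real (n choose V)" using V by simp
        have "G V k = (324*c)^k * (real V / real n) / real (n choose V)"
          unfolding G_def by (rule if_P[OF True])
        then have "real (n choose V) * G V k = (324*c)^k * (real V / real n)"
          using bpos by simp
        also have "\<dots> \<le> (1/8)^k * (2*real k / real n)"
        proof (rule mult_mono)
          show "(324*c)^k \<le> (1/8)^k" by (rule power_mono[OF c8]) (use c0 in simp)
          show "real V / real n \<le> 2*real k / real n"
          proof (rule divide_right_mono)
            have "V \<le> 2*k" using True by linarith
            then have "real V \<le> real (2*k)" by (rule of_nat_mono)
            then show "real V \<le> 2*real k" by simp
          qed simp
        qed (use n1 in simp_all)
        finally show ?thesis using True by simp
      next
        case False
        then have "G V k = 0" unfolding G_def by (rule if_not_P)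
        then show ?thesis by simp
      qed
    qed
    also have "\<dots> = real (card ({..n} \<inter> {V. V \<le> 2*k})) * ((1/8)^k * (2*real k / real n))"
      by (simp add: sum.If_cases)
    also have "\<dots> \<le> real (2*k+1) * ((1/8)^k * (2*real k / real n))"
    proof (rule mult_right_mono)
      have "{..n} \<inter> {V. V \<le> 2*k} \<subseteq> {..2*k}" by auto
      then have "card ({..n} \<inter> {V. V \<le> 2*k}) \<le> card {..2*k}" by (rule card_mono[rotated]) simp
      then show "real (card ({..n} \<inter> {V. V \<le> 2*k})) \<le> real (2*k+1)" by simp
    qed simp
    also have "\<dots> \<le> 6 * (real k ^ 2 * (1/8)^k) / real n"
    proof (cases "k = 0")
      case True then show ?thesis by simp
    next
      case False
      then have k1: "1 \<le> real k" by simp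
      have kk: "real k * 1 \<le> real k * real k" by (rule mult_left_mono[OF k1]) simp
      have ee: "real (2*k+1) * (2*real k) = 4*(real k*real k) + 2*real k" by (simp add: algebra_simps)
      have "real (2*k+1) * (2*real k) \<le> 6 * real k ^ 2"
        unfolding ee power2_eq_square using kk by linarith
      then have "real (2*k+1) * (2*real k) * (1/8)^k \<le> 6 * real k ^ 2 * (1/8)^k"
        by (rule mult_right_mono) simp
      then have "real (2*k+1) * (2*real k) * (1/8)^k / real n \<le> 6 * real k ^ 2 * (1/8)^k / real n"
        by (rule divide_right_mono) simp
      moreover have "real (2*k+1) * ((1/8)^k * (2*real k / real n)) = real (2*k+1) * (2*real k) * (1/8)^k / real n"
        by simp
      ultimately show ?thesis by (simp only: mult.assoc)
    qed
    also have "\<dots> \<le> 6 * (1/2)^k / real n"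
      by (intro divide_right_mono mult_left_mono sq_le) simp_all
    finally show "(\<Sum>U\<in>Pow {..<n}. G (card U) k) \<le> 6 * (1/2)^k / real n" .
  qed
  also have "\<dots> = 6 * (\<Sum>k\<le>K. (1/2)^k) / real n"
    by (subst sum_divide_distrib[symmetric], subst sum_distrib_left[symmetric]) (rule refl)
  also have "\<dots> \<le> 6 * 2 / real n"
    by (intro divide_right_mono mult_left_mono geom) simp_all
  finally show ?thesis by simp
qed



theorem lemma2p2:
  shows "\<exists>c>0. \<forall>p :: nat \<Rightarrow> real.
           (\<forall>n. 0 \<le> p n \<and> p n \<le> c / (real n)^2) \<longrightarrow>
           (\<lambda>n. measure_pmf.prob (random_relators n (p n))
                   {R. good_hypergraph {w \<in> words n. R w}}) \<longlonglongrightarrow> 1"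
proof (intro exI[of _ "1/3000"] conjI allI impI)
  show "(0::real) < 1/3000" by simp
  fix p :: "nat \<Rightarrow> real"
  assume hp: "\<forall>n. 0 \<le> p n \<and> p n \<le> (1/3000) / (real n)^2"
  define P where "P n = measure_pmf.prob (random_relators n (p n)) {R. good_hypergraph {w \<in> words n. R w}}" for n
  have low: "1 - 12 / real n \<le> P n" if n1: "1 \<le> n" for n
  proof -
    have p0: "0 \<le> p n" and pc: "p n \<le> (1/3000) / (real n)^2" using hp by auto
    have "(1/3000) / (real n)^2 \<le> 1"
    proof -
      have "1 \<le> (real n)^2" using n1 by simp
      then show ?thesis by (simp add: divide_le_eq)
    qed
    then have p1: "p n \<le> 1" using pc by linarith
    have "P n = 1 - measure_pmf.prob (random_relators n (p n)) {R. \<not> good_hypergraph {w \<in> words n. R w}}"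
    proof -
      have "{R. good_hypergraph {w \<in> words n. R w}} = space (measure_pmf (random_relators n (p n))) - {R. \<not> good_hypergraph {w \<in> words n. R w}}"
        by auto
      moreover have "measure_pmf.prob (random_relators n (p n)) (space (measure_pmf (random_relators n (p n))) - {R. \<not> good_hypergraph {w \<in> words n. R w}})
          = 1 - measure_pmf.prob (random_relators n (p n)) {R. \<not> good_hypergraph {w \<in> words n. R w}}"
        by (rule measure_pmf.prob_compl) simp
      ultimately show ?thesis unfolding P_def by simp
    qed
    moreover have "measure_pmf.prob (random_relators n (p n)) {R. \<not> good_hypergraph {w \<in> words n. R w}} \<le> 12 / real n"
      using union_bound[OF p0 p1, of n] sum_bound[OF n1 p0 pc] by simp
    ultimately show ?thesis by linarith
  qed
  have "P \<longlonglongrightarrow> 1"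
  proof (rule tendsto_sandwich[of "\<lambda>n. 1 - 12 / real n" _ _ "\<lambda>n. 1"])
    show "\<forall>\<^sub>F n in sequentially. 1 - 12 / real n \<le> P n"
      using eventually_ge_at_top[of 1] by eventually_elim (rule low)
    show "\<forall>\<^sub>F n in sequentially. P n \<le> 1" by (simp add: P_def)
    show "(\<lambda>n. 1 - 12 / real n) \<longlonglongrightarrow> (1::real)"
      using tendsto_diff[OF tendsto_const[of "1::real"] lim_const_over_n[of "12::real"]] by simp
  qed simp
  then show "(\<lambda>n. measure_pmf.prob (random_relators n (p n)) {R. good_hypergraph {w \<in> words n. R w}}) \<longlonglongrightarrow> 1"
    by (simp add: P_def[abs_def])
qed


end
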